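(* Let $K$ be a compact metric space and $(f_j)$ a uniformly bounded sequence of continuous complex-valued functions on $K$ converging pointwise to a function $f$; put $\varphi=\mathrm{Re}\, f$. Let $\alpha$ be a countable ordinal and $x\in K$ with $0<v_\alpha(\varphi)(x)=:\lambda<\infty$. Let $\mathcal U$ be an open neighborhood of $x$ and $0<\eta<1$. Then there is a subsequence $(b_j)$ of $(f_j)$ with the following property: for every strictly increasing sequence of integers $1=m_1<m_2<\cdots$ there exist an integer $k$, points $x_1,\dots,x_{2k-1},x_{2k}=:t$ in $\mathcal U$, and positive numbers $\delta_1,\dots,\delta_k$ such that (1) $\varphi(x_{2j})-\varphi(x_{2j-1})>(1-\eta)\delta_j$ for all $1\le j\le k$; (2) $(1+\eta)\lambda>\sum_{j=1}^k\delta_j>(1-\eta)\lambda$; (3) $\sum_{m_j\le i<m_{j+1}}|b_i(t)-f(x_j)|<\eta\,\delta_{\lfloor (j+1)/2\rfloor}$ for all $1\le j\le 2k-1$; (4) $\sum_{i\ge m_{2k}}|b_i(t)-f(t)|<\eta\,\delta_k$.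
   Context: For $g:K\to[-\infty,\infty]$, $Ug(x)=\limsup_{y\to x}g(y)=\inf_U\sup g(U)$ over open neighborhoods $U$ of $x$ (non-exclusive limsup). For real $\varphi:K\to\mathbb{R}$ the positive transfinite oscillations are defined by transfinite induction: $v_0(\varphi)\equiv0$; $\widetilde v_{\alpha+1}(\varphi)(x)=\limsup_{y\to x}(\varphi(y)-\varphi(x)+v_\alpha(\varphi)(y))$; for limit $\beta$, $\widetilde v_\beta(\varphi)=\sup_{\alpha<\beta}v_\alpha(\varphi)$; and $v_\beta(\varphi)=U\widetilde v_\beta(\varphi)$ (values in $[0,\infty]$). *)

theory Defs
  imports "HOL-Analysis.Analysis" "HOL-Library.Extended_Real"
begin

definition usc_env :: "'a::metric_space set \<Rightarrow> ('a \<Rightarrow> ereal) \<Rightarrow> 'a \<Rightarrow> ereal" where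
  "usc_env K g x = (INF V\<in>{V. open V \<and> x \<in> V}. SUP y\<in>V \<inter> K. g y)"

definition osc_step :: "'a::metric_space set \<Rightarrow> ('a \<Rightarrow> real) \<Rightarrow> ('o::wellorder \<Rightarrow> 'a \<Rightarrow> ereal)
     \<Rightarrow> 'o \<Rightarrow> 'a \<Rightarrow> ereal" where
  "osc_step K \<phi> v a =
     (if \<forall>b. \<not> b < a then (\<lambda>x. 0)
      else if \<exists>b. b < a \<and> (\<forall>c. c < a \<longrightarrow> c \<le> b) then
        (let b = (THE b. b < a \<and> (\<forall>c. c < a \<longrightarrow> c \<le> b))
         in (\<lambda>x. usc_env K (\<lambda>y. ereal (\<phi> y - \<phi> x) + v b y) x))
      else (\<lambda>x. SUP b\<in>{b. b < a}. v b x))"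

text \<open>Positive transfinite oscillation v_a(phi), indexed by elements a of a
  well-ordered type (a represents the ordinal type of {b. b < a}).
  v_0 = 0, and v_a = U (tilde v_a) otherwise.\<close>
definition pos_osc :: "'a::metric_space set \<Rightarrow> ('a \<Rightarrow> real) \<Rightarrow> 'o::wellorder \<Rightarrow> 'a \<Rightarrow> ereal" where
  "pos_osc K \<phi> = wfrec {(b, a). b < a}
     (\<lambda>v a. if \<forall>b. \<not> b < a then (\<lambda>x. 0) else usc_env K (osc_step K \<phi> v a))"

end

theory Submission
  imports Defs
begin

definition maxpred :: "'o::wellorder \<Rightarrow> 'o \<Rightarrow> bool" where
  "maxpred a b \<longleftrightarrow> b < a \<and> (\<forall>c. c < a \<longrightarrow> c \<le> b)"

lemma maxpred_unique: "maxpred a b \<Longrightarrow> maxpred a b' \<Longrightarrow> b = b'"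
  unfolding maxpred_def by (meson antisym)

lemma osc_step_cong:
  assumes "\<And>b. b < a \<Longrightarrow> v b = w b"
  shows "osc_step K \<phi> v a = osc_step K \<phi> w a"
proof -
  have th: "(THE b. b < a \<and> (\<forall>c. c < a \<longrightarrow> c \<le> b)) < a"
    if "\<exists>b. b < a \<and> (\<forall>c. c < a \<longrightarrow> c \<le> b)"
  proof -
    from that obtain b where b: "b < a" "\<forall>c. c < a \<longrightarrow> c \<le> b" by blast
    then have "(THE b. b < a \<and> (\<forall>c. c < a \<longrightarrow> c \<le> b)) = b"
      by (intro the_equality) (auto intro: antisym)
    with b show ?thesis by simp
  qed
  have "(SUP b\<in>{b. b < a}. v b y) = (SUP b\<in>{b. b < a}. w b y)" for y
    using assms by (intro SUP_cong) auto
  then show ?thesis unfolding osc_step_def Let_def using th assms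
    by auto
qed

lemma pos_osc_unfold:
  fixes K :: "'a::metric_space set" and a :: "'o::wellorder"
  shows "pos_osc K \<phi> a = (if \<forall>b. \<not> b < a then (\<lambda>x. 0) else usc_env K (osc_step K \<phi> (pos_osc K \<phi>) a))"
proof -
  define F where "F = (\<lambda>v a. if \<forall>b::'o. \<not> b < a then (\<lambda>x::'a. 0::ereal) else usc_env K (osc_step K \<phi> v a))"
  have "adm_wf {(b, a). b < a} F"
    unfolding adm_wf_def
  proof (intro allI impI)
    fix v w :: "'o \<Rightarrow> 'a \<Rightarrow> ereal" and a :: 'o
    assume h: "\<forall>z. (z, a) \<in> {(b, a). b < a} \<longrightarrow> v z = w z"
    have "osc_step K \<phi> v a = osc_step K \<phi> w a" using h by (intro osc_step_cong) auto
    then show "F v a = F w a" unfolding F_def by simp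
  qed
  from wfrec_fixpoint[OF wf this] have "pos_osc K \<phi> = F (pos_osc K \<phi>)"
    unfolding pos_osc_def F_def by simp
  then show ?thesis unfolding F_def by metis
qed

lemma pos_osc_bot: "\<forall>b. \<not> b < a \<Longrightarrow> pos_osc K \<phi> a = (\<lambda>x. 0)"
  by (subst pos_osc_unfold) simp

lemma pos_osc_nbot: "b < a \<Longrightarrow> pos_osc K \<phi> a = usc_env K (osc_step K \<phi> (pos_osc K \<phi>) a)"
  by (subst pos_osc_unfold) auto

lemma osc_step_succ: "maxpred a b \<Longrightarrow>
  osc_step K \<phi> v a = (\<lambda>x. usc_env K (\<lambda>y. ereal (\<phi> y - \<phi> x) + v b y) x)"
proof -
  assume m: "maxpred a b"
  then have "(THE b. b < a \<and> (\<forall>c. c < a \<longrightarrow> c \<le> b)) = b"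
    unfolding maxpred_def by (intro the_equality) (auto intro: antisym)
  with m show ?thesis unfolding osc_step_def maxpred_def Let_def by auto
qed

lemma osc_step_lim: "b < a \<Longrightarrow> \<not>(\<exists>b. maxpred a b) \<Longrightarrow>
  osc_step K \<phi> v a = (\<lambda>x. SUP b\<in>{b. b < a}. v b x)"
  unfolding osc_step_def maxpred_def by auto

lemma usc_ge: "x \<in> K \<Longrightarrow> g x \<le> usc_env K g x"
  unfolding usc_env_def by (auto intro!: INF_greatest SUP_upper)

lemma usc_le: "open V \<Longrightarrow> x \<in> V \<Longrightarrow> usc_env K g x \<le> (SUP y\<in>V \<inter> K. g y)"
  unfolding usc_env_def by (auto intro!: INF_lower)

lemma usc_lt: "usc_env K g x < M \<Longrightarrow> \<exists>V. open V \<and> x \<in> V \<and> (SUP y\<in>V \<inter> K. g y) < M"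
  unfolding usc_env_def by (auto simp: INF_less_iff)

lemma usc_gt: "c < usc_env K g x \<Longrightarrow> open V \<Longrightarrow> x \<in> V \<Longrightarrow> \<exists>y\<in>V \<inter> K. c < g y"
proof -
  assume a: "c < usc_env K g x" "open V" "x \<in> V"
  then have "c < (SUP y\<in>V \<inter> K. g y)" using usc_le[of V x K g] by (meson less_le_trans)
  then show ?thesis by (simp add: less_SUP_iff)
qed

lemma usc_usc: "usc_env K g x < M \<Longrightarrow> \<exists>V. open V \<and> x \<in> V \<and> (\<forall>w\<in>V. usc_env K g w < M)"
  using usc_lt[of K g x M] usc_le by (meson le_less_trans)

lemma pos_osc_mono:
  fixes K :: "'a::metric_space set" and a a' :: "'o::wellorder"
  assumes "w \<in> K" "a \<le> a'"
  shows "pos_osc K \<phi> a w \<le> pos_osc K \<phi> a' w"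
  using assms(2)
proof (induction a' arbitrary: a rule: less_induct)
  case (less a')
  show ?case
  proof (cases "a = a'")
    case True then show ?thesis by simp
  next
    case False
    with less.prems have aa: "a < a'" by simp
    have eq: "pos_osc K \<phi> a' = usc_env K (osc_step K \<phi> (pos_osc K \<phi>) a')"
      using pos_osc_nbot[OF aa] .
    have "pos_osc K \<phi> a w \<le> osc_step K \<phi> (pos_osc K \<phi>) a' w"
    proof (cases "\<exists>b. maxpred a' b")
      case True
      then obtain b where b: "maxpred a' b" by blast
      then have ab: "a \<le> b" "b < a'" using aa unfolding maxpred_def by auto
      have "pos_osc K \<phi> a w \<le> pos_osc K \<phi> b w" using less.IH[OF ab(2) ab(1)] .
      also have "\<dots> = ereal (\<phi> w - \<phi> w) + pos_osc K \<phi> b w" by (simp add: zero_ereal_def[symmetric])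
      also have "\<dots> \<le> usc_env K (\<lambda>y. ereal (\<phi> y - \<phi> w) + pos_osc K \<phi> b y) w"
        using usc_ge[OF assms(1), of "\<lambda>y. ereal (\<phi> y - \<phi> w) + pos_osc K \<phi> b y"] by simp
      also have "\<dots> = osc_step K \<phi> (pos_osc K \<phi>) a' w" using osc_step_succ[OF b, where K=K and \<phi>=\<phi> and v="pos_osc K \<phi>"] by simp
      finally show ?thesis .
    next
      case False
      then have "osc_step K \<phi> (pos_osc K \<phi>) a' w = (SUP b\<in>{b. b < a'}. pos_osc K \<phi> b w)"
        using osc_step_lim[OF aa False, where K=K and \<phi>=\<phi> and v="pos_osc K \<phi>"] by simp
      moreover have "pos_osc K \<phi> a w \<le> (SUP b\<in>{b. b < a'}. pos_osc K \<phi> b w)"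
        using aa by (intro SUP_upper) auto
      ultimately show ?thesis by simp
    qed
    also have "\<dots> \<le> pos_osc K \<phi> a' w" unfolding eq by (rule usc_ge[OF assms(1)])
    finally show ?thesis .
  qed
qed

lemma pos_osc_nonneg:
  fixes K :: "'a::metric_space set" and a :: "'o::wellorder"
  assumes "w \<in> K"
  shows "0 \<le> pos_osc K \<phi> a w"
proof -
  define a0 where "a0 = (LEAST b::'o. True)"
  have "\<forall>b. \<not> b < a0" unfolding a0_def using not_less_Least by blast
  then have "pos_osc K \<phi> a0 w = 0" using pos_osc_bot by metis
  moreover have "a0 \<le> a" unfolding a0_def by (rule Least_le) simp
  ultimately show ?thesis using pos_osc_mono[OF assms] by metis
qed

lemma lemmaL:
  fixes K :: "'a::metric_space set" and a :: "'o::wellorder"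
  assumes "0 \<le> c" "open V" "y \<in> V" "ereal c < pos_osc K \<phi> a y"
  shows "\<exists>a'\<le>a. \<exists>b. maxpred a' b \<and> (\<exists>z\<in>V \<inter> K.
           ereal c < usc_env K (\<lambda>w. ereal (\<phi> w - \<phi> z) + pos_osc K \<phi> b w) z)"
  using assms(3,4)
proof (induction a arbitrary: y rule: less_induct)
  case (less a)
  have nb: "\<exists>b. b < a"
  proof (rule ccontr)
    assume "\<not> (\<exists>b. b < a)"
    then have "pos_osc K \<phi> a y = 0" using pos_osc_bot by metis
    with less.prems assms(1) show False by simp
  qed
  then obtain b0 where b0: "b0 < a" by blast
  have "ereal c < usc_env K (osc_step K \<phi> (pos_osc K \<phi>) a) y"
    using less.prems(2) pos_osc_nbot[OF b0, where K=K and \<phi>=\<phi>] by simp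
  from usc_gt[OF this assms(2) less.prems(1)] obtain z where
    z: "z \<in> V \<inter> K" "ereal c < osc_step K \<phi> (pos_osc K \<phi>) a z" by blast
  show ?case
  proof (cases "\<exists>b. maxpred a b")
    case True
    then obtain b where b: "maxpred a b" by blast
    show ?thesis using z osc_step_succ[OF b, where K=K and \<phi>=\<phi> and v="pos_osc K \<phi>"] b by auto
  next
    case False
    then have "ereal c < (SUP b\<in>{b. b < a}. pos_osc K \<phi> b z)"
      using z(2) osc_step_lim[OF b0 False, where K=K and \<phi>=\<phi> and v="pos_osc K \<phi>"] by simp
    then obtain b where b: "b < a" "ereal c < pos_osc K \<phi> b z" by (auto simp: less_SUP_iff)
    from less.IH[OF b(1) _ b(2)] z(1) obtain a' where "a' \<le> b" "\<exists>b. maxpred a' b \<and> (\<exists>z\<in>V \<inter> K.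
           ereal c < usc_env K (\<lambda>w. ereal (\<phi> w - \<phi> z) + pos_osc K \<phi> b w) z)" by blast
    then show ?thesis using b(1) by (meson order.strict_implies_order order_trans)
  qed
qed

datatype ('a, 'o) gst = Ev 'a 'o real real real | Od 'a 'o real real real "'a set" | Dn 'a real real

fun pt :: "('a, 'o) gst \<Rightarrow> 'a" where
  "pt (Ev y _ _ _ _) = y" | "pt (Od z _ _ _ _ _) = z" | "pt (Dn t _ _) = t"

lemma ereal_add_lt: "ereal D + t < ereal L \<longleftrightarrow> t < ereal (L - D)"
  by (cases t) auto

lemma ereal_aux1: "ereal (c + k) < ereal d + t \<Longrightarrow> d \<le> k \<Longrightarrow> ereal c < t"
  by (cases t) auto

lemma ereal_aux2: "ereal (c + k) < ereal d + t \<Longrightarrow> 0 < k \<Longrightarrow> ereal (c - d) < t"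
  by (cases t) auto

lemma ereal_aux3: "0 \<le> t \<Longrightarrow> ereal D + (ereal d + t) < ereal L \<Longrightarrow> D + d < L"
  by (cases t) auto

lemma ereal_aux4: "ereal D + (ereal d + t) = ereal (D + d) + t"
  by (cases t) auto

locale gm =
  fixes K :: "'a::metric_space set" and \<phi> :: "'a \<Rightarrow> real" and c0 Lb :: real
begin

fun inv :: "('a, 'o::wellorder) gst \<Rightarrow> bool" where
  "inv (Ev y \<beta> c D d) = (y \<in> K \<and> 0 < c \<and> 0 < d \<and> ereal c < pos_osc K \<phi> \<beta> y \<and>
      ereal D + pos_osc K \<phi> \<beta> y < ereal Lb \<and> D + c = c0)"
| "inv (Od z \<gamma> c \<kappa> D P) = (z \<in> K \<and> 0 < c \<and> 0 < \<kappa> \<and> open P \<and> z \<in> P \<and>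
      ereal (c + \<kappa>) < usc_env K (\<lambda>w. ereal (\<phi> w - \<phi> z) + pos_osc K \<phi> \<gamma> w) z \<and>
      (\<forall>y\<in>P \<inter> K. ereal (c + \<kappa>) < ereal (\<phi> y - \<phi> z) + pos_osc K \<phi> \<gamma> y \<longrightarrow> \<kappa> < \<phi> y - \<phi> z) \<and>
      (\<forall>w\<in>P \<inter> K. ereal D + (ereal (\<phi> w - \<phi> z) + pos_osc K \<phi> \<gamma> w) < ereal Lb) \<and> D + c = c0)"
| "inv (Dn t d D) = (t \<in> K \<and> 0 < d \<and> c0 \<le> D \<and> D < Lb)"

fun mv :: "('a, 'o::wellorder) gst \<Rightarrow> 'a set \<Rightarrow> ('a, 'o) gst \<Rightarrow> bool" where
  "mv (Ev y \<beta> c D d) Ob s' = (pt s' \<in> Ob \<and> inv s' \<and> (\<exists>z \<gamma> \<kappa> P. s' = Od z \<gamma> c \<kappa> D P \<and> \<gamma> < \<beta>))"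
| "mv (Od z \<gamma> c \<kappa> D P) Ob s' = (pt s' \<in> Ob \<and> inv s' \<and> (\<exists>y' d'. d' = \<phi> y' - \<phi> z \<and> \<kappa> < d' \<and>
      (s' = Ev y' \<gamma> (c - d') (D + d') d' \<or> s' = Dn y' d' (D + d'))))"
| "mv (Dn t d D) Ob s' = (pt s' \<in> Ob \<and> s' = Dn t d D)"

lemma mv_Ev:
  fixes \<beta> :: "'o::wellorder"
  assumes "inv (Ev y \<beta> c D d)" "open Ob" "y \<in> Ob"
  shows "\<exists>s'. mv (Ev y \<beta> c D d) Ob s'"
proof -
  from assms(1) have y: "y\<in>K" "0<c" "0<d" "ereal c < pos_osc K \<phi> \<beta> y"
    "ereal D + pos_osc K \<phi> \<beta> y < ereal Lb" "D + c = c0" by simp_all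
  have "\<exists>b. b < \<beta>"
  proof (rule ccontr)
    assume "\<not> (\<exists>b. b < \<beta>)"
    then have "pos_osc K \<phi> \<beta> y = 0" using pos_osc_bot by metis
    with y show False by simp
  qed
  then obtain b0 where b0: "b0 < \<beta>" by blast
  have eqb: "pos_osc K \<phi> \<beta> = usc_env K (osc_step K \<phi> (pos_osc K \<phi>) \<beta>)"
    using pos_osc_nbot[OF b0, where K=K and \<phi>=\<phi>] .
  have "usc_env K (osc_step K \<phi> (pos_osc K \<phi>) \<beta>) y < ereal (Lb - D)"
    using y(5) eqb by (simp add: ereal_add_lt)
  from usc_usc[OF this] obtain N0 where N0: "open N0" "y \<in> N0"
    "\<forall>w\<in>N0. pos_osc K \<phi> \<beta> w < ereal (Lb - D)" using eqb by auto
  define N where "N = N0 \<inter> Ob"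
  have N: "open N" "y \<in> N" "N \<subseteq> Ob" using N0 assms N_def by auto
  define S where "S = {a. a \<le> \<beta> \<and> (\<exists>b. maxpred a b \<and> (\<exists>z\<in>N \<inter> K.
     ereal c < usc_env K (\<lambda>w. ereal (\<phi> w - \<phi> z) + pos_osc K \<phi> b w) z))}"
  have "\<exists>a. a \<in> S" using lemmaL[of c N y K \<phi> \<beta>] N y unfolding S_def by auto
  define \<rho> where "\<rho> = (LEAST a. a \<in> S)"
  have "\<rho> \<in> S" unfolding \<rho>_def using \<open>\<exists>a. a \<in> S\<close> by (rule LeastI_ex)
  then obtain \<gamma> z where rho: "\<rho> \<le> \<beta>" "maxpred \<rho> \<gamma>" "z \<in> N \<inter> K"
    "ereal c < usc_env K (\<lambda>w. ereal (\<phi> w - \<phi> z) + pos_osc K \<phi> \<gamma> w) z"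
    unfolding S_def by blast
  define h where "h = (\<lambda>w. ereal (\<phi> w - \<phi> z) + pos_osc K \<phi> \<gamma> w)"
  have gr: "\<gamma> < \<rho>" using rho(2) unfolding maxpred_def by simp
  have "usc_env K h z = osc_step K \<phi> (pos_osc K \<phi>) \<rho> z"
    using osc_step_succ[OF rho(2), where K=K and \<phi>=\<phi> and v="pos_osc K \<phi>"] h_def by simp
  also have "\<dots> \<le> usc_env K (osc_step K \<phi> (pos_osc K \<phi>) \<rho>) z"
    by (rule usc_ge) (use rho(3) in auto)
  also have "\<dots> = pos_osc K \<phi> \<rho> z"
    using pos_osc_nbot[OF gr, where K=K and \<phi>=\<phi>] by simp
  also have "\<dots> \<le> pos_osc K \<phi> \<beta> z" using pos_osc_mono rho(1,3) by blast
  also have "\<dots> < ereal (Lb - D)" using N0(3) rho(3) N_def by auto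
  finally have hlt: "usc_env K h z < ereal (Lb - D)" .
  have hgt: "ereal c < usc_env K h z" using rho(4) h_def by simp
  obtain u where u: "usc_env K h z = ereal u" using hlt hgt by (cases "usc_env K h z") auto
  define \<kappa> where "\<kappa> = (u - c) / 2"
  have kp: "0 < \<kappa>" using hgt u \<kappa>_def by simp
  have ck: "ereal (c + \<kappa>) < usc_env K h z" using hgt u \<kappa>_def by simp
  from usc_lt[OF hlt] obtain P0 where P0: "open P0" "z \<in> P0" "(SUP w\<in>P0 \<inter> K. h w) < ereal (Lb - D)"
    by blast
  define P where "P = P0 \<inter> N"
  have P: "open P" "z \<in> P" "P \<subseteq> N" using P0 N rho(3) P_def by auto
  have iii: "\<forall>w\<in>P \<inter> K. ereal D + h w < ereal Lb"
  proof
    fix w assume "w \<in> P \<inter> K"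
    then have "h w \<le> (SUP w\<in>P0 \<inter> K. h w)" using P_def by (intro SUP_upper) auto
    then show "ereal D + h w < ereal Lb" using P0(3) by (simp add: ereal_add_lt)
  qed
  have ii: "\<forall>y'\<in>P \<inter> K. ereal (c + \<kappa>) < h y' \<longrightarrow> \<kappa> < \<phi> y' - \<phi> z"
  proof (intro ballI impI)
    fix y' assume y': "y' \<in> P \<inter> K" "ereal (c + \<kappa>) < h y'"
    show "\<kappa> < \<phi> y' - \<phi> z"
    proof (rule ccontr)
      assume "\<not> \<kappa> < \<phi> y' - \<phi> z"
      then have "ereal c < pos_osc K \<phi> \<gamma> y'"
        using ereal_aux1[of c \<kappa> "\<phi> y' - \<phi> z" "pos_osc K \<phi> \<gamma> y'"] y'(2) h_def by simp
      from lemmaL[of c N y' K \<phi> \<gamma>, OF _ N(1) _ this] y' P y obtain a' where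
        a': "a' \<le> \<gamma>" "\<exists>b. maxpred a' b \<and> (\<exists>z\<in>N \<inter> K.
           ereal c < usc_env K (\<lambda>w. ereal (\<phi> w - \<phi> z) + pos_osc K \<phi> b w) z)" by auto
      have "a' \<in> S" unfolding S_def using a' gr rho(1) by auto
      then have "\<rho> \<le> a'" unfolding \<rho>_def by (rule Least_le)
      with a' gr show False by simp
    qed
  qed
  have "inv (Od z \<gamma> c \<kappa> D P)"
    using rho(3) y(2,6) kp P ck ii iii h_def by simp
  moreover have "z \<in> Ob" using rho(3) N by auto
  moreover have "\<gamma> < \<beta>" using gr rho(1) by simp
  ultimately have "mv (Ev y \<beta> c D d) Ob (Od z \<gamma> c \<kappa> D P)" by auto
  then show ?thesis by blast
qed

lemma mv_Od:
  fixes \<gamma> :: "'o::wellorder"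
  assumes "inv (Od z \<gamma> c \<kappa> D P)" "open Ob" "z \<in> Ob"
  shows "\<exists>s'. mv (Od z \<gamma> c \<kappa> D P) Ob s'"
proof -
  from assms(1) have z: "z \<in> K" "0 < c" "0 < \<kappa>" "open P" "z \<in> P"
      "ereal (c + \<kappa>) < usc_env K (\<lambda>w. ereal (\<phi> w - \<phi> z) + pos_osc K \<phi> \<gamma> w) z"
      "\<forall>y\<in>P \<inter> K. ereal (c + \<kappa>) < ereal (\<phi> y - \<phi> z) + pos_osc K \<phi> \<gamma> y \<longrightarrow> \<kappa> < \<phi> y - \<phi> z"
      "\<forall>w\<in>P \<inter> K. ereal D + (ereal (\<phi> w - \<phi> z) + pos_osc K \<phi> \<gamma> w) < ereal Lb" "D + c = c0"
    by simp_all
  have "open (Ob \<inter> P)" "z \<in> Ob \<inter> P" using assms z by auto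
  from usc_gt[OF z(6) this] obtain y' where y': "y' \<in> Ob \<inter> P \<inter> K"
    "ereal (c + \<kappa>) < ereal (\<phi> y' - \<phi> z) + pos_osc K \<phi> \<gamma> y'" by blast
  define d where "d = \<phi> y' - \<phi> z"
  have kd: "\<kappa> < d" using z(7) y' d_def by auto
  have nn: "0 \<le> pos_osc K \<phi> \<gamma> y'" using pos_osc_nonneg y' by blast
  have b3: "ereal D + (ereal d + pos_osc K \<phi> \<gamma> y') < ereal Lb" using z(8) y' d_def by auto
  show ?thesis
  proof (cases "c - d \<le> 0")
    case True
    have "inv (Dn y' d (D + d) :: ('a, 'o) gst)"
      using y' kd z(3,9) True ereal_aux3[OF nn b3] by auto
    then have "mv (Od z \<gamma> c \<kappa> D P) Ob (Dn y' d (D + d))" using y' kd d_def by auto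
    then show ?thesis by blast
  next
    case False
    have "ereal (c - d) < pos_osc K \<phi> \<gamma> y'" using ereal_aux2[OF _ z(3)] y'(2) d_def by blast
    then have "inv (Ev y' \<gamma> (c - d) (D + d) d)"
      using y' kd z(3,9) False b3 ereal_aux4[of D d] by auto
    then have "mv (Od z \<gamma> c \<kappa> D P) Ob (Ev y' \<gamma> (c - d) (D + d) d)" using y' kd d_def by auto
    then show ?thesis by blast
  qed
qed

lemma mv_ex:
  fixes s :: "('a, 'o::wellorder) gst"
  assumes "inv s" "open Ob" "pt s \<in> Ob"
  shows "\<exists>s'. mv s Ob s'"
proof (cases s)
  case (Ev y \<beta> c D d)
  have "\<exists>s'. mv (Ev y \<beta> c D d) Ob s'"
    by (rule mv_Ev) (use assms Ev in metis, use assms Ev in auto)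
  then show ?thesis using Ev by simp
next
  case (Od z \<gamma> c \<kappa> D P)
  have "\<exists>s'. mv (Od z \<gamma> c \<kappa> D P) Ob s'"
    by (rule mv_Od) (use assms Od in metis, use assms Od in auto)
  then show ?thesis using Od by simp
next
  case (Dn t d D)
  have "mv s Ob s" using assms Dn by simp
  then show ?thesis by blast
qed

end

fun isEv :: "('a,'o) gst \<Rightarrow> bool" where "isEv (Ev _ _ _ _ _) = True" | "isEv _ = False"
fun isOd :: "('a,'o) gst \<Rightarrow> bool" where "isOd (Od _ _ _ _ _ _) = True" | "isOd _ = False"
fun isDn :: "('a,'o) gst \<Rightarrow> bool" where "isDn (Dn _ _ _) = True" | "isDn _ = False"
fun ordE :: "('a,'o) gst \<Rightarrow> 'o" where "ordE (Ev _ b _ _ _) = b" | "ordE (Od _ b _ _ _ _) = b" | "ordE (Dn _ _ _) = undefined"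
fun kap :: "('a,'o) gst \<Rightarrow> real" where "kap (Od _ _ _ k _ _) = k" | "kap _ = 0"
fun dd :: "('a,'o) gst \<Rightarrow> real" where "dd (Ev _ _ _ _ d) = d" | "dd (Dn _ d _) = d" | "dd _ = 0"
fun DD :: "('a,'o) gst \<Rightarrow> real" where "DD (Ev _ _ _ D _) = D" | "DD (Od _ _ _ _ D _) = D" | "DD (Dn _ _ D) = D"

lemma strict_desc_false:
  fixes h :: "nat \<Rightarrow> 'o::wellorder"
  assumes "\<And>n. h (Suc n) < h n"
  shows False
proof -
  define a where "a = (LEAST a. a \<in> range h)"
  have "a \<in> range h" unfolding a_def by (rule LeastI_ex) blast
  then obtain n where "a = h n" by blast
  moreover have "a \<le> h (Suc n)" unfolding a_def by (rule Least_le) blast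
  ultimately show False using assms[of n] by simp
qed

lemma geom_block: "1 \<le> a \<Longrightarrow> (\<Sum>i\<in>{a..<b}. (1/2::real)^i) \<le> 1"
proof -
  assume a: "1 \<le> a"
  have "(\<Sum>i\<in>{a..<b}. (1/2::real)^i) \<le> (\<Sum>i\<in>{1..<b}. (1/2::real)^i)"
    using a by (intro sum_mono2) auto
  also have "\<dots> \<le> 1"
  proof (cases b)
    case 0 then show ?thesis by simp
  next
    case (Suc b')
    have "{..<b} = insert 0 {1..<b}" using Suc by auto
    then have "(\<Sum>i\<in>{1..<b}. (1/2::real)^i) = (\<Sum>i<b. (1/2::real)^i) - 1" by simp
    moreover have "(\<Sum>i<b. (1/2::real)^i) \<le> 2"
      unfolding sum_gp_strict by simp
    ultimately show ?thesis by simp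
  qed
  finally show ?thesis by simp
qed

context gm begin

lemma mvE: "mv s Ob s' \<Longrightarrow> isEv s \<Longrightarrow> isOd s' \<and> DD s' = DD s \<and> ordE s' < ordE s \<and> pt s' \<in> Ob \<and> inv s'"
  by (cases s) auto

lemma mvO: "mv s Ob s' \<Longrightarrow> isOd s \<Longrightarrow> (isEv s' \<or> isDn s') \<and> DD s' = DD s + dd s' \<and>
   dd s' = \<phi> (pt s') - \<phi> (pt s) \<and> kap s < dd s' \<and> (isEv s' \<longrightarrow> ordE s' = ordE s) \<and> pt s' \<in> Ob \<and> inv s'"
  by (cases s) auto

lemma mvD: "mv s Ob s' \<Longrightarrow> isDn s \<Longrightarrow> s' = s \<and> pt s \<in> Ob"
  by (cases s) auto

lemma mv_inv: "inv s \<Longrightarrow> mv s Ob s' \<Longrightarrow> pt s' \<in> Ob \<and> inv s'"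
  by (cases s) auto

lemma inv_pt: "inv s \<Longrightarrow> pt s \<in> K"
  by (cases s) auto

end

locale mn = gm K \<phi> c0 Lb for K :: "'a::metric_space set" and \<phi> c0 Lb +
  fixes f :: "nat \<Rightarrow> 'a \<Rightarrow> complex" and g :: "'a \<Rightarrow> complex" and \<alpha> :: "'o::wellorder"
    and x :: 'a and U :: "'a set" and \<eta> :: real
  assumes cont: "\<And>j. continuous_on K (f j)"
    and conv: "\<And>y. y \<in> K \<Longrightarrow> (\<lambda>j. f j y) \<longlonglongrightarrow> g y"
    and xK: "x \<in> K" and lam_pos: "0 < pos_osc K \<phi> \<alpha> x" and lam_fin: "pos_osc K \<phi> \<alpha> x < \<infinity>"
    and Uo: "open U" and xU: "x \<in> U" and eta: "0 < \<eta>" "\<eta> < 1"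
    and c0_def: "c0 = (1 - \<eta>/2) * real_of_ereal (pos_osc K \<phi> \<alpha> x)"
    and Lb_def: "Lb = (1 + \<eta>/2) * real_of_ereal (pos_osc K \<phi> \<alpha> x)"
begin

fun tol :: "('a, 'o) gst \<Rightarrow> real" where
  "tol (Ev _ _ _ _ d) = \<eta> * d / 2" | "tol (Od _ _ _ k _ _) = \<eta> * k / 2" | "tol (Dn _ d _) = \<eta> * d / 2"

lemma tol_pos: "inv s \<Longrightarrow> 0 < tol s"
  using eta by (cases s) auto

definition move :: "('a, 'o) gst \<Rightarrow> 'a set \<Rightarrow> ('a, 'o) gst" where
  "move s W = (SOME s'. mv s W s')"

definition Cont :: "(nat \<Rightarrow> nat) \<Rightarrow> 'a \<Rightarrow> nat \<Rightarrow> nat \<Rightarrow> real \<Rightarrow> 'a set" where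
  "Cont r p a b \<theta> = (SOME V. open V \<and> p \<in> V \<and>
     (\<forall>w\<in>V \<inter> K. (\<Sum>i\<in>{a..<b}. norm (f (r i) w - f (r i) p)) < \<theta>))"

lemma Cont_ok:
  assumes "p \<in> K" "0 < \<theta>"
  shows "open (Cont r p a b \<theta>) \<and> p \<in> Cont r p a b \<theta> \<and>
     (\<forall>w\<in>Cont r p a b \<theta> \<inter> K. (\<Sum>i\<in>{a..<b}. norm (f (r i) w - f (r i) p)) < \<theta>)"
proof -
  define h where "h = (\<lambda>w. \<Sum>i\<in>{a..<b}. norm (f (r i) w - f (r i) p))"
  have "continuous_on K h" unfolding h_def
    by (intro continuous_intros cont)
  then obtain d where d: "d > 0" "\<forall>w\<in>K. dist w p < d \<longrightarrow> dist (h w) (h p) < \<theta>"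
    using assms unfolding continuous_on_iff by blast
  have hp: "h p = 0" unfolding h_def by simp
  have "open (ball p d) \<and> p \<in> ball p d \<and> (\<forall>w\<in>ball p d \<inter> K. h w < \<theta>)"
    using d hp by (auto simp: dist_commute dist_real_def)
  then have "\<exists>V. open V \<and> p \<in> V \<and> (\<forall>w\<in>V \<inter> K. h w < \<theta>)" by blast
  then show ?thesis unfolding Cont_def h_def by (rule someI_ex)
qed

lemma Cont_cong:
  assumes "b \<le> n" "\<forall>i<n. r i = r' i"
  shows "Cont r p a b \<theta> = Cont r' p a b \<theta>"
proof -
  have "\<And>w. (\<Sum>i\<in>{a..<b}. norm (f (r i) w - f (r i) p)) = (\<Sum>i\<in>{a..<b}. norm (f (r' i) w - f (r' i) p))"
    using assms by (intro sum.cong) auto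
  then show ?thesis unfolding Cont_def by simp
qed

fun Hs :: "(nat \<Rightarrow> nat) \<Rightarrow> nat list \<Rightarrow> 'a set \<times> nat \<times> ('a, 'o) gst" where
  "Hs r [] = (U, 1, Ev x \<alpha> c0 0 1)"
| "Hs r (n # ms) = (case Hs r ms of (W, a, s) \<Rightarrow>
     (W \<inter> Cont r (pt s) a n (tol s), n, move s (W \<inter> Cont r (pt s) a n (tol s))))"

lemma lam_real: "\<exists>l. pos_osc K \<phi> \<alpha> x = ereal l \<and> 0 < l"
  using lam_pos lam_fin by (cases "pos_osc K \<phi> \<alpha> x") auto

lemma inv0: "inv (Ev x \<alpha> c0 0 1)"
proof -
  obtain l where l: "pos_osc K \<phi> \<alpha> x = ereal l" "0 < l" using lam_real by blast
  have "c0 = (1 - \<eta>/2) * l" "Lb = (1 + \<eta>/2) * l" using c0_def Lb_def l by auto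
  moreover have "\<eta> * l < l" using mult_strict_right_mono[of \<eta> 1 l] eta l by simp
  moreover have "0 < \<eta> * l" using eta l by simp
  ultimately have "0 < c0" "c0 < l" "l < Lb" by (auto simp: algebra_simps)
  then show ?thesis using l xK by simp
qed

lemma Hs_inv: "Hs r ms = (W, a, s) \<Longrightarrow> open W \<and> W \<subseteq> U \<and> pt s \<in> W \<and> inv s"
proof (induction ms arbitrary: W a s)
  case Nil then show ?case using Uo xU inv0 by auto
next
  case (Cons n ms)
  obtain W0 a0 s0 where h: "Hs r ms = (W0, a0, s0)" by (cases "Hs r ms") auto
  from Cons.IH[OF h] have ih: "open W0" "W0 \<subseteq> U" "pt s0 \<in> W0" "inv s0" by auto
  define W' where "W' = W0 \<inter> Cont r (pt s0) a0 n (tol s0)"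
  have co: "open (Cont r (pt s0) a0 n (tol s0))" "pt s0 \<in> Cont r (pt s0) a0 n (tol s0)"
    using Cont_ok[OF inv_pt[OF ih(4)] tol_pos[OF ih(4)]] by auto
  have W': "open W'" "W' \<subseteq> U" "pt s0 \<in> W'" using ih co W'_def by auto
  have "\<exists>s'. mv s0 W' s'" using mv_ex[OF ih(4) W'(1,3)] .
  then have "mv s0 W' (move s0 W')" unfolding move_def by (rule someI_ex)
  then have "pt (move s0 W') \<in> W' \<and> inv (move s0 W')" using mv_inv ih(4) by blast
  moreover have "W = W'" "s = move s0 W'" using Cons.prems h W'_def by auto
  ultimately show ?case using W' by (simp only:)
qed

lemma Hs_cong: "set ms \<subseteq> {..n} \<Longrightarrow> \<forall>i<n. r i = r' i \<Longrightarrow> Hs r ms = Hs r' ms"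
proof (induction ms)
  case Nil then show ?case by simp
next
  case (Cons b ms)
  then have e: "Hs r ms = Hs r' ms" by auto
  obtain W0 a0 s0 where h: "Hs r ms = (W0, a0, s0)" by (cases "Hs r ms") auto
  have "Cont r (pt s0) a0 b (tol s0) = Cont r' (pt s0) a0 b (tol s0)"
    using Cons.prems by (intro Cont_cong[of b n]) auto
  have h': "Hs r' ms = (W0, a0, s0)" using e h by simp
  show ?case using h h' \<open>Cont r (pt s0) a0 b (tol s0) = Cont r' (pt s0) a0 b (tol s0)\<close> by simp
qed

definition Fs :: "(nat \<Rightarrow> nat) \<Rightarrow> nat \<Rightarrow> ('a \<times> real) set" where
  "Fs r n = (\<lambda>ms. (pt (snd (snd (Hs r ms))), tol (snd (snd (Hs r ms))))) ` {ms. set ms \<subseteq> {..n} \<and> length ms \<le> n}"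

lemma Fs_finite: "finite (Fs r n)"
  unfolding Fs_def by (intro finite_imageI finite_lists_length_le) auto

lemma Fs_mono: "n \<le> n' \<Longrightarrow> Fs r n \<subseteq> Fs r n'"
  unfolding Fs_def by (intro image_mono) auto

lemma Fs_prop: "q \<in> Fs r n \<Longrightarrow> fst q \<in> K \<and> 0 < snd q"
proof -
  assume "q \<in> Fs r n"
  then obtain ms where q: "q = (pt (snd (snd (Hs r ms))), tol (snd (snd (Hs r ms))))"
    unfolding Fs_def by blast
  obtain W a s where h: "Hs r ms = (W, a, s)" by (cases "Hs r ms") auto
  from Hs_inv[OF h] have "inv s" by blast
  then show ?thesis using q h inv_pt tol_pos by auto
qed

lemma Fs_cong: "\<forall>i<n. r i = r' i \<Longrightarrow> Fs r n = Fs r' n"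
proof -
  assume a: "\<forall>i<n. r i = r' i"
  show ?thesis unfolding Fs_def
  proof (rule image_cong[OF refl])
    fix ms assume "ms \<in> {ms. set ms \<subseteq> {..n} \<and> length ms \<le> n}"
    then have "Hs r ms = Hs r' ms" using a by (intro Hs_cong[of ms n]) auto
    then show "(pt (snd (snd (Hs r ms))), tol (snd (snd (Hs r ms)))) =
      (pt (snd (snd (Hs r' ms))), tol (snd (snd (Hs r' ms))))" by simp
  qed
qed

definition nxt :: "nat \<Rightarrow> (nat \<Rightarrow> nat) \<Rightarrow> nat" where
  "nxt n r' = (SOME j. (0 < n \<longrightarrow> r' (n - 1) < j) \<and>
     (\<forall>q\<in>Fs r' n. norm (f j (fst q) - g (fst q)) < snd q / 2^n))"

lemma nxt_ok: "(0 < n \<longrightarrow> r' (n - 1) < nxt n r') \<and>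
     (\<forall>q\<in>Fs r' n. norm (f (nxt n r') (fst q) - g (fst q)) < snd q / 2^n)"
proof -
  have "\<forall>q\<in>Fs r' n. eventually (\<lambda>j. norm (f j (fst q) - g (fst q)) < snd q / 2^n) sequentially"
  proof
    fix q assume q: "q \<in> Fs r' n"
    then have "fst q \<in> K" "0 < snd q / 2^n" using Fs_prop by auto
    with conv[of "fst q"] show "eventually (\<lambda>j. norm (f j (fst q) - g (fst q)) < snd q / 2^n) sequentially"
      unfolding tendsto_iff dist_norm by blast
  qed
  then have "eventually (\<lambda>j. \<forall>q\<in>Fs r' n. norm (f j (fst q) - g (fst q)) < snd q / 2^n) sequentially"
    using Fs_finite by (simp add: eventually_ball_finite)
  moreover have "eventually (\<lambda>j. r' (n - 1) < j) sequentially" by (rule eventually_gt_at_top)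
  ultimately have "eventually (\<lambda>j. (0 < n \<longrightarrow> r' (n - 1) < j) \<and>
     (\<forall>q\<in>Fs r' n. norm (f j (fst q) - g (fst q)) < snd q / 2^n)) sequentially"
    by eventually_elim auto
  then have "\<exists>j. (0 < n \<longrightarrow> r' (n - 1) < j) \<and>
     (\<forall>q\<in>Fs r' n. norm (f j (fst q) - g (fst q)) < snd q / 2^n)"
    unfolding eventually_sequentially by blast
  then show ?thesis unfolding nxt_def by (rule someI_ex)
qed

primrec R :: "nat \<Rightarrow> nat \<Rightarrow> nat" where
  "R 0 = (\<lambda>_. 0)"
| "R (Suc n) = (R n)(n := nxt n (R n))"

definition rs :: "nat \<Rightarrow> nat" where "rs n = R (Suc n) n"

lemma R_agree: "i < n \<Longrightarrow> R n i = rs i"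
proof (induction n)
  case 0 then show ?case by simp
next
  case (Suc n) then show ?case by (cases "i = n") (auto simp: rs_def)
qed

lemma rs_eq: "rs n = nxt n (R n)" unfolding rs_def by simp

lemma Fs_R: "Fs (R n) n = Fs rs n"
  using R_agree by (intro Fs_cong) auto

lemma rs_approx: "q \<in> Fs rs n \<Longrightarrow> norm (f (rs n) (fst q) - g (fst q)) < snd q / 2^n"
  using nxt_ok[of n "R n"] unfolding rs_eq[symmetric] Fs_R by blast

lemma rs_approx2: "q \<in> Fs rs n0 \<Longrightarrow> n0 \<le> i \<Longrightarrow> norm (f (rs i) (fst q) - g (fst q)) < snd q / 2^i"
  using rs_approx Fs_mono by blast

lemma rs_mono: "strict_mono rs"
proof (rule strict_mono_Suc_iff[THEN iffD2], intro allI)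
  fix n
  have "R (Suc n) n < nxt (Suc n) (R (Suc n))" using nxt_ok[of "Suc n" "R (Suc n)"] by simp
  then show "rs n < rs (Suc n)" using rs_eq[of "Suc n"] R_agree[of n "Suc n"] by simp
qed

end

context gm begin
lemma inv_kap: "inv s \<Longrightarrow> isOd s \<Longrightarrow> 0 < kap s" by (cases s) auto
lemma inv_Dn: "inv s \<Longrightarrow> isDn s \<Longrightarrow> c0 \<le> DD s \<and> DD s < Lb" by (cases s) auto
end

context mn begin

lemma tolO: "isOd s \<Longrightarrow> tol s = \<eta> * kap s / 2" by (cases s) auto
lemma tolE: "\<not> isOd s \<Longrightarrow> tol s = \<eta> * dd s / 2" by (cases s) auto

lemma main_m:
  fixes m :: "nat \<Rightarrow> nat"
  assumes m1: "m 1 = 1" and ms: "\<forall>j\<ge>1. m j < m (Suc j)"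
  shows "\<exists>k::nat. k \<ge> 1 \<and> (\<exists>(xs::nat \<Rightarrow> 'a) (\<delta>::nat \<Rightarrow> real).
         (\<forall>i\<in>{1..2*k}. xs i \<in> U \<inter> K) \<and>
         (\<forall>j\<in>{1..k}. 0 < \<delta> j) \<and>
         (\<forall>j\<in>{1..k}. \<phi> (xs (2*j)) - \<phi> (xs (2*j - 1)) > (1 - \<eta>) * \<delta> j) \<and>
         (1 + \<eta>) * real_of_ereal (pos_osc K \<phi> \<alpha> x) > (\<Sum>j=1..k. \<delta> j) \<and>
         (\<Sum>j=1..k. \<delta> j) > (1 - \<eta>) * real_of_ereal (pos_osc K \<phi> \<alpha> x) \<and>
         (\<forall>j\<in>{1..2*k-1}.
            (\<Sum>i\<in>{m j..<m (Suc j)}. norm (f (rs i) (xs (2*k)) - g (xs j)))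
              < \<eta> * \<delta> ((j + 1) div 2)) \<and>
         summable (\<lambda>i. norm (f (rs (i + m (2*k))) (xs (2*k)) - g (xs (2*k)))) \<and>
         (\<Sum>i. norm (f (rs (i + m (2*k))) (xs (2*k)) - g (xs (2*k)))) < \<eta> * \<delta> k)"
proof -
  define L where "L j = rev (map m [1..<Suc j])" for j
  have L_Suc: "L (Suc j) = m (Suc j) # L j" for j unfolding L_def by simp
  have L0: "L 0 = []" unfolding L_def by simp
  define W where "W j = fst (Hs rs (L j))" for j
  define ml where "ml j = fst (snd (Hs rs (L j)))" for j
  define s where "s j = snd (snd (Hs rs (L j)))" for j
  have nd: "Hs rs (L j) = (W j, ml j, s j)" for j unfolding W_def ml_def s_def by simp
  have I: "open (W j) \<and> W j \<subseteq> U \<and> pt (s j) \<in> W j \<and> inv (s j)" for j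
    using Hs_inv[OF nd] .
  have s0: "s 0 = Ev x \<alpha> c0 0 1" unfolding s_def L0 by simp
  have raw: "Hs rs (L (Suc j)) = (W j \<inter> Cont rs (pt (s j)) (ml j) (m (Suc j)) (tol (s j)), m (Suc j),
      move (s j) (W j \<inter> Cont rs (pt (s j)) (ml j) (m (Suc j)) (tol (s j))))" for j
    using nd[of j] unfolding L_Suc by simp
  have WS: "W (Suc j) = W j \<inter> Cont rs (pt (s j)) (ml j) (m (Suc j)) (tol (s j))" for j
    using raw[of j] nd[of "Suc j"] by (metis prod.inject)
  have sS: "s (Suc j) = move (s j) (W (Suc j))" for j
    using raw[of j] nd[of "Suc j"] WS[of j] by (metis prod.inject)
  have mlS: "ml (Suc j) = m (Suc j)" for j
    using raw[of j] nd[of "Suc j"] by (metis prod.inject)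
  have ml: "1 \<le> j \<Longrightarrow> ml j = m j" for j using mlS by (cases j) auto
  have CO: "open (Cont rs (pt (s j)) (ml j) (m (Suc j)) (tol (s j))) \<and>
     pt (s j) \<in> Cont rs (pt (s j)) (ml j) (m (Suc j)) (tol (s j)) \<and>
     (\<forall>w\<in>Cont rs (pt (s j)) (ml j) (m (Suc j)) (tol (s j)) \<inter> K.
        (\<Sum>i\<in>{ml j..<m (Suc j)}. norm (f (rs i) w - f (rs i) (pt (s j)))) < tol (s j))" for j
    using I[of j] by (intro Cont_ok inv_pt tol_pos) auto
  have MV: "mv (s j) (W (Suc j)) (s (Suc j))" for j
  proof -
    have "pt (s j) \<in> W (Suc j)" using WS CO I by auto
    then have "\<exists>s'. mv (s j) (W (Suc j)) s'" using mv_ex I by blast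
    then show ?thesis unfolding sS move_def by (rule someI_ex)
  qed
  have Wanti: "j \<le> j' \<Longrightarrow> W j' \<subseteq> W j" for j j'
    by (rule lift_Suc_antimono_le[of W]) (use WS in auto)
  have Wcont: "\<forall>w\<in>W (Suc j) \<inter> K.
        (\<Sum>i\<in>{ml j..<m (Suc j)}. norm (f (rs i) w - f (rs i) (pt (s j)))) < tol (s j)" for j
    using CO[of j] WS[of j] by auto
  have mge: "1 \<le> j \<Longrightarrow> j \<le> m j" for j
  proof (induction j)
    case 0 then show ?case by simp
  next
    case (Suc j)
    show ?case
    proof (cases "j = 0")
      case True then show ?thesis using m1 by simp
    next
      case False
      then have "j \<le> m j" "m j < m (Suc j)" using Suc ms by auto
      then show ?thesis by simp
    qed
  qed
  have mmono: "1 \<le> i \<Longrightarrow> i \<le> j \<Longrightarrow> m i \<le> m j" for i j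
  proof (induction j)
    case 0 then show ?case by simp
  next
    case (Suc j)
    show ?case
    proof (cases "i = Suc j")
      case True then show ?thesis by simp
    next
      case False
      then have "i \<le> j" "1 \<le> j" using Suc.prems by auto
      then have "m i \<le> m j" "m j < m (Suc j)" using Suc ms by auto
      then show ?thesis by simp
    qed
  qed
  have FsIn: "1 \<le> j \<Longrightarrow> (pt (s j), tol (s j)) \<in> Fs rs (m j)" for j
  proof -
    assume j: "1 \<le> j"
    have "set (L j) \<subseteq> {..m j}" unfolding L_def using mmono j by auto
    moreover have "length (L j) \<le> m j" unfolding L_def using mge j by simp
    ultimately show ?thesis unfolding Fs_def s_def by force
  qed
  have E1: "isEv (s j) \<Longrightarrow> isOd (s (Suc j)) \<and> DD (s (Suc j)) = DD (s j) \<and> ordE (s (Suc j)) < ordE (s j)" for j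
    using mvE[OF MV[of j]] by blast
  have O1: "isOd (s j) \<Longrightarrow> (isEv (s (Suc j)) \<or> isDn (s (Suc j))) \<and> DD (s (Suc j)) = DD (s j) + dd (s (Suc j)) \<and>
     dd (s (Suc j)) = \<phi> (pt (s (Suc j))) - \<phi> (pt (s j)) \<and> kap (s j) < dd (s (Suc j)) \<and>
     (isEv (s (Suc j)) \<longrightarrow> ordE (s (Suc j)) = ordE (s j))" for j
    using mvO[OF MV[of j]] by blast
  have ex: "\<exists>p. isDn (s (2*p))"
  proof (rule ccontr)
    assume nd: "\<not> (\<exists>p. isDn (s (2*p)))"
    have ev: "isEv (s (2*p))" for p
    proof (induction p)
      case 0 then show ?case using s0 by simp
    next
      case (Suc p)
      have "isOd (s (Suc (2*p)))" using E1 Suc by blast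
      then have "isEv (s (Suc (Suc (2*p)))) \<or> isDn (s (Suc (Suc (2*p))))" using O1 by blast
      moreover have "Suc (Suc (2*p)) = 2 * Suc p" by simp
      ultimately show ?case using nd by metis
    qed
    have "ordE (s (2 * Suc p)) < ordE (s (2*p))" for p
    proof -
      have a: "isOd (s (Suc (2*p)))" "ordE (s (Suc (2*p))) < ordE (s (2*p))" using E1 ev by blast+
      have "Suc (Suc (2*p)) = 2 * Suc p" by simp
      then have "ordE (s (2 * Suc p)) = ordE (s (Suc (2*p)))" using O1[of "Suc (2*p)"] a ev[of "Suc p"] by metis
      with a show ?thesis by simp
    qed
    then show False using strict_desc_false[of "\<lambda>p. ordE (s (2*p))"] by blast
  qed
  define k where "k = (LEAST p. isDn (s (2*p)))"
  have Dk: "isDn (s (2*k))" unfolding k_def using ex by (rule LeastI_ex)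
  have k1: "1 \<le> k"
  proof (rule ccontr)
    assume "\<not> 1 \<le> k" then have "k = 0" by simp
    with Dk s0 show False by simp
  qed
  have EvB: "p < k \<Longrightarrow> isEv (s (2*p))" for p
  proof (induction p)
    case 0 then show ?case using s0 by simp
  next
    case (Suc p)
    have "isOd (s (Suc (2*p)))" using E1 Suc by simp
    then have "isEv (s (Suc (Suc (2*p)))) \<or> isDn (s (Suc (Suc (2*p))))" using O1 by blast
    moreover have "Suc (Suc (2*p)) = 2 * Suc p" by simp
    moreover have "\<not> isDn (s (2 * Suc p))" using Suc.prems unfolding k_def by (rule not_less_Least)
    ultimately show ?case by metis
  qed
  have OdB: "p < k \<Longrightarrow> isOd (s (Suc (2*p)))" for p using E1 EvB by blast
  define xs where "xs j = pt (s j)" for j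
  define \<delta> where "\<delta> p = dd (s (2*p))" for p
  have pair: "1 \<le> p \<Longrightarrow> p \<le> k \<Longrightarrow> isOd (s (2*p - 1)) \<and> \<delta> p = \<phi> (xs (2*p)) - \<phi> (xs (2*p - 1)) \<and>
      kap (s (2*p - 1)) < \<delta> p \<and> 0 < \<delta> p \<and> DD (s (2*p)) = DD (s (2*(p-1))) + \<delta> p" for p
  proof -
    assume p: "1 \<le> p" "p \<le> k"
    define a where "a = 2*(p-1)"
    have e: "2*p - 1 = Suc a" "2*p = Suc (Suc a)" "2*(p-1) = a" using p unfolding a_def by auto
    have od: "isOd (s (Suc a))" using OdB[of "p-1"] p unfolding a_def by simp
    have ev: "isEv (s a)" using EvB[of "p-1"] p unfolding a_def by simp
    have d1: "DD (s (Suc a)) = DD (s a)" using E1[of a] ev by blast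
    have kp: "kap (s (Suc a)) > 0" using inv_kap I od by blast
    have o: "DD (s (Suc (Suc a))) = DD (s (Suc a)) + dd (s (Suc (Suc a)))"
      "dd (s (Suc (Suc a))) = \<phi> (pt (s (Suc (Suc a)))) - \<phi> (pt (s (Suc a)))"
      "kap (s (Suc a)) < dd (s (Suc (Suc a)))" using O1[of "Suc a"] od by blast+
    show ?thesis unfolding e \<delta>_def xs_def using od d1 kp o by simp
  qed
  have acc: "p \<le> k \<Longrightarrow> DD (s (2*p)) = (\<Sum>q=1..p. \<delta> q)" for p
  proof (induction p)
    case 0 then show ?case using s0 by simp
  next
    case (Suc p)
    then show ?case using pair[of "Suc p"] by simp
  qed
  obtain l where l: "pos_osc K \<phi> \<alpha> x = ereal l" "0 < l" using lam_real by blast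
  have lr: "real_of_ereal (pos_osc K \<phi> \<alpha> x) = l" using l by simp
  have fin: "c0 \<le> (\<Sum>q=1..k. \<delta> q)" "(\<Sum>q=1..k. \<delta> q) < Lb"
    using inv_Dn[OF _ Dk] I acc[of k] by auto
  have "0 < \<eta> * l" using eta l by simp
  then have bounds: "(1 + \<eta>) * l > Lb" "c0 > (1 - \<eta>) * l"
    using c0_def Lb_def lr by (auto simp: algebra_simps)
  have inUK: "\<forall>i\<in>{1..2*k}. xs i \<in> U \<inter> K"
    using I inv_pt unfolding xs_def by blast
  have dpos: "\<forall>j\<in>{1..k}. 0 < \<delta> j"
  proof
    fix j assume "j \<in> {1..k}"
    then have "1 \<le> j" "j \<le> k" by auto
    from pair[OF this] show "0 < \<delta> j" by blast
  qed
  have jumps: "\<forall>j\<in>{1..k}. \<phi> (xs (2*j)) - \<phi> (xs (2*j - 1)) > (1 - \<eta>) * \<delta> j"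
  proof
    fix j assume j: "j \<in> {1..k}"
    then have "1 \<le> j" "j \<le> k" by auto
    from pair[OF this] have "\<phi> (xs (2*j)) - \<phi> (xs (2*j - 1)) = \<delta> j" "0 < \<delta> j" by auto
    then show "\<phi> (xs (2*j)) - \<phi> (xs (2*j - 1)) > (1 - \<eta>) * \<delta> j" using eta by simp
  qed
  define t where "t = xs (2*k)"
  have tK: "t \<in> K" unfolding t_def xs_def using I inv_pt by blast
  have blocks: "\<forall>j\<in>{1..2*k-1}.
            (\<Sum>i\<in>{m j..<m (Suc j)}. norm (f (rs i) t - g (xs j))) < \<eta> * \<delta> ((j + 1) div 2)"
  proof
    fix j assume j: "j \<in> {1..2*k-1}"
    have "Suc j \<le> 2*k" using j k1 by auto
    then have tW: "t \<in> W (Suc j)" using Wanti[of "Suc j" "2*k"] I[of "2*k"] unfolding t_def xs_def by blast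
    have A: "(\<Sum>i\<in>{m j..<m (Suc j)}. norm (f (rs i) t - f (rs i) (xs j))) < tol (s j)"
      using Wcont[of j] tW tK ml[of j] j unfolding xs_def by auto
    have B: "norm (f (rs i) (xs j) - g (xs j)) \<le> tol (s j) * (1/2)^i" if "i \<in> {m j..<m (Suc j)}" for i
    proof -
      have j1: "1 \<le> j" using j by simp
      have i: "m j \<le> i" using that by simp
      have "norm (f (rs i) (xs j) - g (xs j)) < tol (s j) / 2^i"
        using rs_approx2[OF FsIn[OF j1] i] unfolding xs_def by simp
      moreover have "tol (s j) * (1/2)^i = tol (s j) / 2^i" by (simp add: power_one_over)
      ultimately show ?thesis by simp
    qed
    have "(\<Sum>i\<in>{m j..<m (Suc j)}. norm (f (rs i) t - g (xs j))) \<le>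
        (\<Sum>i\<in>{m j..<m (Suc j)}. norm (f (rs i) t - f (rs i) (xs j)) + norm (f (rs i) (xs j) - g (xs j)))"
      by (intro sum_mono norm_diff_triangle_le) auto
    also have "\<dots> = (\<Sum>i\<in>{m j..<m (Suc j)}. norm (f (rs i) t - f (rs i) (xs j))) +
        (\<Sum>i\<in>{m j..<m (Suc j)}. norm (f (rs i) (xs j) - g (xs j)))" by (rule sum.distrib)
    also have "(\<Sum>i\<in>{m j..<m (Suc j)}. norm (f (rs i) (xs j) - g (xs j))) \<le>
         (\<Sum>i\<in>{m j..<m (Suc j)}. tol (s j) * (1/2)^i)" using B by (rule sum_mono)
    also have "\<dots> = tol (s j) * (\<Sum>i\<in>{m j..<m (Suc j)}. (1/2)^i)" by (simp add: sum_distrib_left)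
    also have "\<dots> \<le> tol (s j)"
    proof -
      have "0 < tol (s j)" using tol_pos I by blast
      moreover have "(\<Sum>i\<in>{m j..<m (Suc j)}. (1/2::real)^i) \<le> 1"
        using geom_block[of "m j" "m (Suc j)"] mge[of j] j by simp
      ultimately show ?thesis by (simp add: mult_left_le)
    qed
    finally have S: "(\<Sum>i\<in>{m j..<m (Suc j)}. norm (f (rs i) t - g (xs j))) < 2 * tol (s j)" using A by simp
    have "2 * tol (s j) \<le> \<eta> * \<delta> ((j + 1) div 2)"
    proof (cases "odd j")
      case True
      define p where "p = (j + 1) div 2"
      have p: "1 \<le> p" "p \<le> k" "2*p - 1 = j" using True j unfolding p_def by (auto elim!: oddE)
      have "isOd (s j)" "kap (s j) < \<delta> p" using pair[OF p(1,2)] p(3) by auto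
      then have "2 * tol (s j) = \<eta> * kap (s j)" "\<eta> * kap (s j) \<le> \<eta> * \<delta> p"
        using tolO[of "s j"] eta by auto
      then show ?thesis unfolding p_def by simp
    next
      case False
      define p where "p = (j + 1) div 2"
      have p: "1 \<le> p" "p < k" "2*p = j" using False j unfolding p_def by (auto elim!: evenE)
      have "isEv (s j)" using EvB[OF p(2)] p(3) by simp
      then have "\<not> isOd (s j)" by (cases "s j") auto
      then show ?thesis using tolE[of "s j"] p(3) unfolding p_def \<delta>_def by simp
    qed
    with S show "(\<Sum>i\<in>{m j..<m (Suc j)}. norm (f (rs i) t - g (xs j))) < \<eta> * \<delta> ((j + 1) div 2)" by simp
  qed
  have tailb: "norm (f (rs (i + m (2*k))) t - g t) \<le> tol (s (2*k)) / 2 * (1/2)^i" for i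
  proof -
    have m1': "1 \<le> m (2*k)" using mge[of "2*k"] k1 by simp
    have "norm (f (rs (i + m (2*k))) t - g t) < tol (s (2*k)) / 2^(i + m (2*k))"
      using rs_approx2[OF FsIn[of "2*k"], of "i + m (2*k)"] k1 unfolding t_def xs_def by simp
    also have "\<dots> \<le> tol (s (2*k)) / 2^(Suc i)"
    proof -
      have "(2::real)^(Suc i) \<le> 2^(i + m (2*k))" using m1' by (intro power_increasing) auto
      moreover have "0 < tol (s (2*k))" using tol_pos I by blast
      ultimately show ?thesis by (intro divide_left_mono) auto
    qed
    also have "\<dots> = tol (s (2*k)) / 2 * (1/2)^i" by (simp add: power_one_over)
    finally show ?thesis by simp
  qed
  have sg: "summable (\<lambda>i. tol (s (2*k)) / 2 * (1/2::real)^i)"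
    by (intro summable_mult summable_geometric) simp
  have summ: "summable (\<lambda>i. norm (f (rs (i + m (2*k))) t - g t))"
    by (rule summable_comparison_test[OF _ sg]) (use tailb in auto)
  have "(\<Sum>i. norm (f (rs (i + m (2*k))) t - g t)) \<le> (\<Sum>i. tol (s (2*k)) / 2 * (1/2::real)^i)"
    by (rule suminf_le[OF tailb summ sg])
  also have "\<dots> = tol (s (2*k))"
    using suminf_mult[OF summable_geometric[of "1/2::real"], of "tol (s (2*k)) / 2"] suminf_geometric[of "1/2::real"]
    by simp
  also have "\<dots> < \<eta> * \<delta> k"
  proof -
    have "\<not> isOd (s (2*k))" using Dk by (cases "s (2*k)") auto
    then have "tol (s (2*k)) = \<eta> * \<delta> k / 2" using tolE unfolding \<delta>_def by simp
    moreover have "0 < \<eta> * \<delta> k" using dpos k1 eta by simp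
    ultimately show ?thesis by simp
  qed
  finally have tail: "(\<Sum>i. norm (f (rs (i + m (2*k))) t - g t)) < \<eta> * \<delta> k" .
  show ?thesis
    apply (rule exI[of _ k], rule conjI[OF k1], rule exI[of _ xs], rule exI[of _ \<delta>])
    using inUK dpos jumps fin bounds lr blocks summ tail unfolding t_def by auto
qed

end

theorem theorem3p3:
  fixes K :: "'a::metric_space set"
    and f :: "nat \<Rightarrow> 'a \<Rightarrow> complex"
    and g :: "'a \<Rightarrow> complex"
    and \<alpha> :: "'o::wellorder"
    and x :: 'a and U :: "'a set" and \<eta> :: real
  assumes "compact K"
    and "\<And>j. continuous_on K (f j)"
    and "\<exists>B. \<forall>j. \<forall>y\<in>K. norm (f j y) \<le> B"
    and "\<And>y. y \<in> K \<Longrightarrow> (\<lambda>j. f j y) \<longlonglongrightarrow> g y"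
    and "countable {\<beta>. \<beta> < \<alpha>}"
    and "x \<in> K"
    and "0 < pos_osc K (\<lambda>y. Re (g y)) \<alpha> x"
    and "pos_osc K (\<lambda>y. Re (g y)) \<alpha> x < \<infinity>"
    and "open U" and "x \<in> U"
    and "0 < \<eta>" and "\<eta> < 1"
  shows "\<exists>r::nat \<Rightarrow> nat. strict_mono r \<and>
    (\<forall>m::nat \<Rightarrow> nat. m 1 = 1 \<and> (\<forall>j\<ge>1. m j < m (Suc j)) \<longrightarrow>
      (\<exists>k::nat. k \<ge> 1 \<and> (\<exists>(xs::nat \<Rightarrow> 'a) (\<delta>::nat \<Rightarrow> real).
         (\<forall>i\<in>{1..2*k}. xs i \<in> U \<inter> K) \<and>
         (\<forall>j\<in>{1..k}. 0 < \<delta> j) \<and>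
         (\<forall>j\<in>{1..k}. Re (g (xs (2*j))) - Re (g (xs (2*j - 1))) > (1 - \<eta>) * \<delta> j) \<and>
         (1 + \<eta>) * real_of_ereal (pos_osc K (\<lambda>y. Re (g y)) \<alpha> x) > (\<Sum>j=1..k. \<delta> j) \<and>
         (\<Sum>j=1..k. \<delta> j) > (1 - \<eta>) * real_of_ereal (pos_osc K (\<lambda>y. Re (g y)) \<alpha> x) \<and>
         (\<forall>j\<in>{1..2*k-1}.
            (\<Sum>i\<in>{m j..<m (Suc j)}. norm (f (r i) (xs (2*k)) - g (xs j)))
              < \<eta> * \<delta> ((j + 1) div 2)) \<and>
         summable (\<lambda>i. norm (f (r (i + m (2*k))) (xs (2*k)) - g (xs (2*k)))) \<and>
         (\<Sum>i. norm (f (r (i + m (2*k))) (xs (2*k)) - g (xs (2*k)))) < \<eta> * \<delta> k)))"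
proof -
  interpret mn K "\<lambda>y. Re (g y)" "(1 - \<eta>/2) * real_of_ereal (pos_osc K (\<lambda>y. Re (g y)) \<alpha> x)"
    "(1 + \<eta>/2) * real_of_ereal (pos_osc K (\<lambda>y. Re (g y)) \<alpha> x)" f g \<alpha> x U \<eta>
    by unfold_locales (use assms in auto)
  show ?thesis
  proof (intro exI[of _ rs] conjI allI impI)
    show "strict_mono rs" by (rule rs_mono)
  next
    fix m :: "nat \<Rightarrow> nat"
    assume "m 1 = 1 \<and> (\<forall>j\<ge>1. m j < m (Suc j))"
    then show "\<exists>k\<ge>1. \<exists>xs \<delta>.
         (\<forall>i\<in>{1..2*k}. xs i \<in> U \<inter> K) \<and>
         (\<forall>j\<in>{1..k}. 0 < \<delta> j) \<and>
         (\<forall>j\<in>{1..k}. Re (g (xs (2*j))) - Re (g (xs (2*j - 1))) > (1 - \<eta>) * \<delta> j) \<and>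
         (1 + \<eta>) * real_of_ereal (pos_osc K (\<lambda>y. Re (g y)) \<alpha> x) > (\<Sum>j=1..k. \<delta> j) \<and>
         (\<Sum>j=1..k. \<delta> j) > (1 - \<eta>) * real_of_ereal (pos_osc K (\<lambda>y. Re (g y)) \<alpha> x) \<and>
         (\<forall>j\<in>{1..2*k-1}.
            (\<Sum>i\<in>{m j..<m (Suc j)}. norm (f (rs i) (xs (2*k)) - g (xs j)))
              < \<eta> * \<delta> ((j + 1) div 2)) \<and>
         summable (\<lambda>i. norm (f (rs (i + m (2*k))) (xs (2*k)) - g (xs (2*k)))) \<and>
         (\<Sum>i. norm (f (rs (i + m (2*k))) (xs (2*k)) - g (xs (2*k)))) < \<eta> * \<delta> k"
      using main_m[of m] by simp
  qed
qed

end
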